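(* Let $\mathcal{M}$ be a nontrivial, unbounded graph matroid family with dimensionality $d$, threshold $t$ and rank function $r$. Let $r_0=r(K_t)-d\cdot t$, let $\varepsilon=\frac{1}{6d}$, and let $\delta$ be a positive integer with $\delta\ge\max(6r_0,t)$ such that every graph with minimum degree at least $\delta$ has a $d$-dominating set of size at most $\varepsilon|V(G)|$. If $G=(V,E)$ is a graph with minimum degree at least $\delta$, then there is a vertex $v_0\in V$ such that $r(G)\le r(G-v_0)+d$.
   Context: All graphs are finite and simple and have no isolated vertices. A graph matroid family $\mathcal{M}$ assigns to every graph $G$ a matroid $\mathcal{M}(G)$ on $E(G)$ such that (i) every graph isomorphism $V(G)\to V(H)$ induces an isomorphism $\mathcal{M}(G)\to\mathcal{M}(H)$, and (ii) for every subgraph $H$ of $G$, $\mathcal{M}(H)$ is the restriction of $\mathcal{M}(G)$ to $E(H)$. $r(G)$ is the rank of $\mathcal{M}(G)$. $\mathcal{M}$ is nontrivial if some graph $G$ has $r(G)<|E(G)|$, unbounded if $r(K_n)$ is unbounded. An $\mathcal{M}$-circuit is a graph $C$ with $r(C)<|E(C)|$ and $r(C-e)=|E(C)|-1$ for all edges $e$. Dimensionality $d$: minimum over $\mathcal{M}$-circuits of (minimum degree $-1$); threshold $t$: minimum of $|V(C)|-1$ over $\mathcal{M}$-circuits $C$ of minimum degree $d+1$. A set $U\subseteq V(G)$ is $d$-dominating in $G$ if every vertex of $V(G)\setminus U$ has at least $d$ neighbours in $U$. *)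

theory Defs
  imports Complex_Main
begin

text \<open>Graphs: finite simple graphs without isolated vertices, with vertices in nat,
  represented by their edge set (each edge a 2-element vertex set).\<close>

type_synonym graph = "nat set set"

definition is_graph :: "graph \<Rightarrow> bool" where
  "is_graph G \<longleftrightarrow> finite G \<and> (\<forall>e\<in>G. card e = 2)"

definition verts :: "graph \<Rightarrow> nat set" where
  "verts G = \<Union>G"

definition degree :: "graph \<Rightarrow> nat \<Rightarrow> nat" where
  "degree G v = card {e\<in>G. v \<in> e}"

definition min_degree :: "graph \<Rightarrow> nat" where
  "min_degree G = Min (degree G ` verts G)"

definition delete_vertex :: "graph \<Rightarrow> nat \<Rightarrow> graph" where
  "delete_vertex G v = {e\<in>G. v \<notin> e}"

definition complete_graph :: "nat \<Rightarrow> graph" where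
  "complete_graph n = {{i, j} | i j. i < n \<and> j < n \<and> i \<noteq> j}"

definition d_dominating :: "graph \<Rightarrow> nat \<Rightarrow> nat set \<Rightarrow> bool" where
  "d_dominating G d U \<longleftrightarrow> U \<subseteq> verts G \<and>
     (\<forall>v\<in>verts G - U. d \<le> card {u\<in>U. {u, v} \<in> G})"

definition matroid :: "'a set \<Rightarrow> ('a set \<Rightarrow> bool) \<Rightarrow> bool" where
  "matroid S I \<longleftrightarrow> finite S \<and> I {} \<and> (\<forall>X. I X \<longrightarrow> X \<subseteq> S) \<and>
     (\<forall>X Y. I Y \<and> X \<subseteq> Y \<longrightarrow> I X) \<and>
     (\<forall>X Y. I X \<and> I Y \<and> card X < card Y \<longrightarrow> (\<exists>y\<in>Y - X. I (insert y X)))"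

definition mrank :: "('a set \<Rightarrow> bool) \<Rightarrow> 'a set \<Rightarrow> nat" where
  "mrank I X = Max (card ` {Y. Y \<subseteq> X \<and> I Y})"

definition graph_matroid_family :: "(graph \<Rightarrow> nat set set \<Rightarrow> bool) \<Rightarrow> bool" where
  "graph_matroid_family M \<longleftrightarrow>
     (\<forall>G. is_graph G \<longrightarrow> matroid G (M G)) \<and>
     (\<forall>G H f. is_graph G \<and> is_graph H \<and> bij_betw f (verts G) (verts H) \<and>
        (\<forall>u\<in>verts G. \<forall>v\<in>verts G. {u, v} \<in> G \<longleftrightarrow> {f u, f v} \<in> H) \<longrightarrow>
        (\<forall>F. F \<subseteq> G \<longrightarrow> (M G F \<longleftrightarrow> M H ((`) f ` F)))) \<and>
     (\<forall>G H. is_graph G \<and> H \<subseteq> G \<longrightarrow> (\<forall>F. M H F \<longleftrightarrow> (M G F \<and> F \<subseteq> H)))"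

definition grank :: "(graph \<Rightarrow> nat set set \<Rightarrow> bool) \<Rightarrow> graph \<Rightarrow> nat" where
  "grank M G = mrank (M G) G"

definition nontrivial_family :: "(graph \<Rightarrow> nat set set \<Rightarrow> bool) \<Rightarrow> bool" where
  "nontrivial_family M \<longleftrightarrow> (\<exists>G. is_graph G \<and> grank M G < card G)"

definition unbounded_family :: "(graph \<Rightarrow> nat set set \<Rightarrow> bool) \<Rightarrow> bool" where
  "unbounded_family M \<longleftrightarrow> (\<forall>k. \<exists>n. k < grank M (complete_graph n))"

definition is_circuit :: "(graph \<Rightarrow> nat set set \<Rightarrow> bool) \<Rightarrow> graph \<Rightarrow> bool" where
  "is_circuit M C \<longleftrightarrow> is_graph C \<and> grank M C < card C \<and>
     (\<forall>e\<in>C. grank M (C - {e}) = card C - 1)"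

definition dimensionality :: "(graph \<Rightarrow> nat set set \<Rightarrow> bool) \<Rightarrow> nat" where
  "dimensionality M = (LEAST k. \<exists>C. is_circuit M C \<and> min_degree C - 1 = k)"

definition threshold :: "(graph \<Rightarrow> nat set set \<Rightarrow> bool) \<Rightarrow> nat" where
  "threshold M = (LEAST k. \<exists>C. is_circuit M C \<and> min_degree C = dimensionality M + 1
      \<and> card (verts C) - 1 = k)"

end

theory Submission
  imports Defs
begin

lemma mrank_fin: "finite X \<Longrightarrow> finite (card ` {Y. Y \<subseteq> X \<and> I Y})"
  by (rule finite_imageI) (rule finite_subset[of _ "Pow X"], auto)

lemma mrank_ge: "finite X \<Longrightarrow> Y \<subseteq> X \<Longrightarrow> I Y \<Longrightarrow> card Y \<le> mrank I X"
  unfolding mrank_def by (rule Max_ge[OF mrank_fin]) auto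

lemma mrank_ex: "finite X \<Longrightarrow> I {} \<Longrightarrow> \<exists>Y. Y \<subseteq> X \<and> I Y \<and> card Y = mrank I X"
proof -
  assume "finite X" "I {}"
  then have "mrank I X \<in> card ` {Y. Y \<subseteq> X \<and> I Y}"
    unfolding mrank_def by (intro Max_in mrank_fin) auto
  then show ?thesis by auto
qed

lemma mrank_le_card: "finite X \<Longrightarrow> I {} \<Longrightarrow> mrank I X \<le> card X"
  by (metis card_mono mrank_ex)

lemma matroid_down: "matroid S I \<Longrightarrow> I Y \<Longrightarrow> X \<subseteq> Y \<Longrightarrow> I X"
  unfolding matroid_def by blast

lemma matroid_empty: "matroid S I \<Longrightarrow> I {}"
  unfolding matroid_def by blast

lemma matroid_aug: "matroid S I \<Longrightarrow> I X \<Longrightarrow> I Y \<Longrightarrow> card X < card Y \<Longrightarrow> \<exists>y\<in>Y - X. I (insert y X)"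
  unfolding matroid_def by blast

lemma maximal_card:
  assumes m: "matroid S I" and fX: "finite X" and JX: "J \<subseteq> X" and IJ: "I J"
    and mx: "\<forall>x\<in>X - J. \<not> I (insert x J)"
  shows "card J = mrank I X"
proof -
  obtain Y where Y: "Y \<subseteq> X" "I Y" "card Y = mrank I X"
    using mrank_ex[of X I] fX matroid_empty[OF m] by blast
  have "card J \<le> mrank I X" using mrank_ge[of X J I] fX JX IJ by blast
  moreover have "\<not> card J < card Y"
  proof
    assume "card J < card Y"
    then obtain y where "y \<in> Y - J" "I (insert y J)" using matroid_aug[OF m IJ Y(2)] by blast
    then show False using mx Y(1) by blast
  qed
  ultimately show ?thesis using Y by linarith
qed

lemma extend_maximal:
  assumes m: "matroid S I" and fX: "finite X" and JX: "J \<subseteq> X" and IJ: "I J"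
  shows "\<exists>J'. J \<subseteq> J' \<and> J' \<subseteq> X \<and> I J' \<and> (\<forall>x\<in>X - J'. \<not> I (insert x J'))"
proof -
  let ?P = "\<lambda>J'. J \<subseteq> J' \<and> J' \<subseteq> X \<and> I J'"
  obtain J' where J': "?P J'" and mn: "\<forall>K. ?P K \<longrightarrow> card X - card J' \<le> card X - card K"
    using ex_has_least_nat[of ?P J "\<lambda>K. card X - card K"] JX IJ by blast
  have "\<forall>x\<in>X - J'. \<not> I (insert x J')"
  proof (intro ballI notI)
    fix x assume x: "x \<in> X - J'" and Ix: "I (insert x J')"
    have "?P (insert x J')" using J' x Ix by auto
    then have "card X - card J' \<le> card X - card (insert x J')" using mn by blast
    moreover have "card (insert x J') = card J' + 1"
      using x J' fX finite_subset[of J' X] by simp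
    moreover have "card (insert x J') \<le> card X" using x J' fX by (intro card_mono) auto
    ultimately show False by linarith
  qed
  then show ?thesis using J' by blast
qed

lemma indep_rank: "matroid S I \<Longrightarrow> finite Y \<Longrightarrow> I Y \<Longrightarrow> mrank I Y = card Y"
  using maximal_card[of S I Y Y] by auto

lemma rank_card_indep: "matroid S I \<Longrightarrow> finite X \<Longrightarrow> mrank I X = card X \<Longrightarrow> I X"
  by (metis card_subset_eq matroid_empty mrank_ex)

lemma rank_mono: "finite X' \<Longrightarrow> X \<subseteq> X' \<Longrightarrow> I {} \<Longrightarrow> mrank I X \<le> mrank I X'"
  by (metis finite_subset mrank_ex mrank_ge order_trans)

lemma rank_subadd:
  assumes m: "matroid S I" and f: "finite X" "finite Z"
  shows "mrank I (X \<union> Z) \<le> mrank I X + card Z"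
proof -
  obtain Y where Y: "Y \<subseteq> X \<union> Z" "I Y" "card Y = mrank I (X \<union> Z)"
    using mrank_ex[of "X \<union> Z" I] f matroid_empty[OF m] by auto
  have "card (Y \<inter> X) \<le> mrank I X"
    using mrank_ge[OF f(1), of "Y \<inter> X" I] matroid_down[OF m Y(2)] by auto
  moreover have "Y \<subseteq> (Y \<inter> X) \<union> Z" using Y by auto
  then have "card Y \<le> card (Y \<inter> X) + card Z"
    by (meson card_Un_le card_mono f finite_Int finite_UnI order_trans)
  ultimately show ?thesis using Y by linarith
qed

lemma rank_closure_add:
  assumes m: "matroid S I" and f: "finite X" and ZX: "Z \<subseteq> X" and IZ: "I Z"
    and dep: "\<not> I (insert e Z)"
  shows "mrank I (insert e X) = mrank I X"
proof -
  obtain J where J: "Z \<subseteq> J" "J \<subseteq> insert e X" "I J" "\<forall>x\<in>insert e X - J. \<not> I (insert x J)"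
    using extend_maximal[OF m _ _ IZ, of "insert e X"] f ZX by blast
  have "e \<notin> J" using J dep matroid_down[OF m, of J "insert e Z"] by blast
  then have JX: "J \<subseteq> X" using J by auto
  have "card J = mrank I (insert e X)" using maximal_card[OF m _ J(2) J(3) J(4)] f by simp
  moreover have "card J = mrank I X" using maximal_card[OF m f JX J(3)] J(4) by blast
  ultimately show ?thesis by simp
qed

lemma is_graph_subset: "is_graph G \<Longrightarrow> H \<subseteq> G \<Longrightarrow> is_graph H"
  unfolding is_graph_def by (auto intro: finite_subset)

lemma fam_matroid: "graph_matroid_family M \<Longrightarrow> is_graph G \<Longrightarrow> matroid G (M G)"
  unfolding graph_matroid_family_def by (drule conjunct1) (erule allE, erule mp)

lemma fam_restrict: "graph_matroid_family M \<Longrightarrow> is_graph G \<Longrightarrow> H \<subseteq> G \<Longrightarrow> M H F \<longleftrightarrow> M G F \<and> F \<subseteq> H"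
  unfolding graph_matroid_family_def
  apply (drule conjunct2, drule conjunct2)
  apply (erule allE[of _ G], erule allE[of _ H])
  apply (drule mp, rule conjI, assumption, assumption)
  apply (erule allE[of _ F], assumption)
  done

lemma grank_sub: "graph_matroid_family M \<Longrightarrow> is_graph G \<Longrightarrow> H \<subseteq> G \<Longrightarrow> grank M H = mrank (M G) H"
proof -
  assume a: "graph_matroid_family M" "is_graph G" "H \<subseteq> G"
  have "{Y. Y \<subseteq> H \<and> M H Y} = {Y. Y \<subseteq> H \<and> M G Y}" using fam_restrict[OF a] by blast
  then show ?thesis unfolding grank_def mrank_def by simp
qed

lemma inj_image_edges: "is_graph G \<Longrightarrow> inj_on f (verts G) \<Longrightarrow> inj_on ((`) f) G"
proof (rule inj_onI)
  fix x y assume "inj_on f (verts G)" "x \<in> G" "y \<in> G" "f ` x = f ` y"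
  moreover have "x \<subseteq> verts G" "y \<subseteq> verts G" using \<open>x \<in> G\<close> \<open>y \<in> G\<close> unfolding verts_def by auto
  ultimately show "x = y" using inj_on_image_eq_iff[of f "verts G" x y] by blast
qed

lemma iso_lemma:
  assumes fam: "graph_matroid_family M" and G: "is_graph G" and inj: "inj_on f (verts G)"
  defines "H \<equiv> (`) f ` G"
  shows "is_graph H" "\<And>F. F \<subseteq> G \<Longrightarrow> M G F \<longleftrightarrow> M H ((`) f ` F)" "grank M H = grank M G"
proof -
  have ev: "e \<subseteq> verts G" if "e \<in> G" for e using that unfolding verts_def by auto
  show gH: "is_graph H" unfolding is_graph_def H_def
  proof
    show "finite ((`) f ` G)" using G unfolding is_graph_def by auto
    show "\<forall>e\<in>(`) f ` G. card e = 2"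
    proof
      fix e assume "e \<in> (`) f ` G"
      then obtain e' where e': "e' \<in> G" "e = f ` e'" by auto
      have "card (f ` e') = card e'" using inj ev[OF e'(1)] by (metis card_image inj_on_subset)
      then show "card e = 2" using e' G unfolding is_graph_def by auto
    qed
  qed
  have vH: "verts H = f ` verts G" unfolding H_def verts_def by auto
  have bij: "bij_betw f (verts G) (verts H)" using inj vH by (simp add: bij_betw_def)
  have pres: "\<forall>u\<in>verts G. \<forall>v\<in>verts G. {u, v} \<in> G \<longleftrightarrow> {f u, f v} \<in> H"
  proof (intro ballI iffI)
    fix u v assume "u \<in> verts G" "v \<in> verts G" "{u,v} \<in> G"
    then show "{f u, f v} \<in> H" unfolding H_def by (metis image_empty image_insert image_eqI)
  next
    fix u v assume uv: "u \<in> verts G" "v \<in> verts G" "{f u, f v} \<in> H"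
    then obtain e where e: "e \<in> G" "{f u, f v} = f ` e" unfolding H_def by auto
    have "f ` {u,v} = f ` e" using e by simp
    then have "{u,v} = e" using inj_on_image_eq_iff[OF inj, of "{u,v}" e] uv ev[OF e(1)] by auto
    then show "{u,v} \<in> G" using e by simp
  qed
  have iso: "\<forall>F. F \<subseteq> G \<longrightarrow> (M G F \<longleftrightarrow> M H ((`) f ` F))"
    using fam G gH bij pres unfolding graph_matroid_family_def by blast
  then show "\<And>F. F \<subseteq> G \<Longrightarrow> M G F \<longleftrightarrow> M H ((`) f ` F)" by blast
  have injE: "inj_on ((`) f) G" using inj_image_edges[OF G inj] .
  have "card ` {Y. Y \<subseteq> H \<and> M H Y} = card ` {Y. Y \<subseteq> G \<and> M G Y}"
  proof (intro set_eqI iffI)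
    fix k assume "k \<in> card ` {Y. Y \<subseteq> H \<and> M H Y}"
    then obtain Y where Y: "Y \<subseteq> H" "M H Y" "k = card Y" by auto
    define F where "F = {e \<in> G. f ` e \<in> Y}"
    have YF: "Y = (`) f ` F" using Y(1) unfolding F_def H_def by auto
    have "F \<subseteq> G" unfolding F_def by auto
    moreover have "card Y = card F" using YF injE \<open>F \<subseteq> G\<close> by (metis card_image inj_on_subset)
    ultimately show "k \<in> card ` {Y. Y \<subseteq> G \<and> M G Y}" using iso Y YF by auto
  next
    fix k assume "k \<in> card ` {Y. Y \<subseteq> G \<and> M G Y}"
    then obtain F where F: "F \<subseteq> G" "M G F" "k = card F" by auto
    have "card ((`) f ` F) = card F" using injE F(1) by (metis card_image inj_on_subset)
    moreover have "(`) f ` F \<subseteq> H" using F(1) unfolding H_def by auto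
    moreover have "M H ((`) f ` F)" using iso F by blast
    ultimately show "k \<in> card ` {Y. Y \<subseteq> H \<and> M H Y}" by (metis (mono_tags, lifting) F(3) image_eqI mem_Collect_eq)
  qed
  then show "grank M H = grank M G" unfolding grank_def mrank_def by simp
qed

lemma verts_finite: "is_graph G \<Longrightarrow> finite (verts G)"
  unfolding is_graph_def verts_def
  by (metis card.infinite finite_Union zero_neq_numeral)

lemma edge_two: "is_graph G \<Longrightarrow> e \<in> G \<Longrightarrow> \<exists>a b. a \<noteq> b \<and> e = {a,b}"
  unfolding is_graph_def by (metis card_2_iff)

lemma degree_le: assumes G: "is_graph G" and v: "v \<in> verts G"
  shows "degree G v \<le> card (verts G) - 1"
proof -
  have "{e\<in>G. v \<in> e} \<subseteq> (\<lambda>u. {v,u}) ` (verts G - {v})"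
  proof
    fix e assume e: "e \<in> {e\<in>G. v \<in> e}"
    then obtain a b where ab: "a \<noteq> b" "e = {a,b}" using edge_two[OF G] by blast
    then have "e \<subseteq> verts G" using e unfolding verts_def by auto
    then show "e \<in> (\<lambda>u. {v,u}) ` (verts G - {v})" using e ab by auto
  qed
  then have "degree G v \<le> card ((\<lambda>u. {v,u}) ` (verts G - {v}))"
    unfolding degree_def by (intro card_mono) (auto intro: verts_finite[OF G])
  also have "\<dots> \<le> card (verts G - {v})" by (rule card_image_le) (simp add: verts_finite[OF G])
  finally show ?thesis using v verts_finite[OF G] by simp
qed

lemma degree_pos: assumes G: "is_graph G" and v: "v \<in> verts G" shows "1 \<le> degree G v"
proof -
  obtain e where "e \<in> G" "v \<in> e" using v unfolding verts_def by auto
  moreover have "finite {e\<in>G. v \<in> e}" using G unfolding is_graph_def by auto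
  ultimately show ?thesis unfolding degree_def by (metis (mono_tags, lifting) One_nat_def Suc_leI card_gt_0_iff empty_iff mem_Collect_eq)
qed

lemma min_degree_le: "is_graph G \<Longrightarrow> v \<in> verts G \<Longrightarrow> min_degree G \<le> degree G v"
  unfolding min_degree_def by (simp add: verts_finite)

lemma min_degree_attained: "is_graph G \<Longrightarrow> G \<noteq> {} \<Longrightarrow> \<exists>v\<in>verts G. min_degree G = degree G v"
proof -
  assume G: "is_graph G" "G \<noteq> {}"
  then obtain e where "e \<in> G" by auto
  then obtain a b where "e = {a,b}" using edge_two[OF G(1)] by blast
  then have "verts G \<noteq> {}" using \<open>e \<in> G\<close> unfolding verts_def by blast
  then have "min_degree G \<in> degree G ` verts G" unfolding min_degree_def
    by (intro Min_in) (auto simp: verts_finite[OF G(1)])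
  then show ?thesis by auto
qed

lemma min_dep_circuit:
  assumes fam: "graph_matroid_family M" and G: "is_graph G" and D: "D \<subseteq> G" and dep: "\<not> M G D"
  shows "\<exists>C\<subseteq>D. is_circuit M C"
proof -
  let ?P = "\<lambda>C. C \<subseteq> D \<and> \<not> M G C"
  obtain C where C: "?P C" and mn: "\<forall>C'. ?P C' \<longrightarrow> card C \<le> card C'"
    using ex_has_least_nat[of ?P D card] D dep by blast
  have fD: "finite D" using G D unfolding is_graph_def by (auto intro: finite_subset)
  have fC: "finite C" using C fD by (auto intro: finite_subset)
  have CG: "C \<subseteq> G" using C D by auto
  have mG: "matroid G (M G)" using fam_matroid[OF fam G] .
  have sub: "M G C'" if "C' \<subset> C" for C'
  proof (rule ccontr)
    assume "\<not> M G C'"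
    then have "card C \<le> card C'" using mn that C by auto
    moreover have "card C' < card C" using that fC by (simp add: psubset_card_mono)
    ultimately show False by simp
  qed
  have gC: "is_graph C" using is_graph_subset[OF G CG] .
  have mC: "matroid C (M C)" using fam_matroid[OF fam gC] .
  have rC: "M C F \<longleftrightarrow> M G F \<and> F \<subseteq> C" for F using fam_restrict[OF fam G CG] .
  have nC: "\<not> M C C" using rC C by auto
  have "grank M C \<le> card C" unfolding grank_def using mrank_le_card[of C "M C"] fC matroid_empty[OF mC] by blast
  moreover have "grank M C \<noteq> card C" unfolding grank_def using rank_card_indep[OF mC fC] nC by blast
  ultimately have lt: "grank M C < card C" by simp
  have "grank M (C - {e}) = card C - 1" if e: "e \<in> C" for e
  proof -
    have sb: "C - {e} \<subseteq> G" using CG by auto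
    have gE: "is_graph (C - {e})" using is_graph_subset[OF G sb] .
    have "M (C - {e}) (C - {e})" using fam_restrict[OF fam G sb] sub[of "C - {e}"] e by auto
    then have "grank M (C - {e}) = card (C - {e})" unfolding grank_def
      using indep_rank[OF fam_matroid[OF fam gE]] fC by auto
    then show ?thesis using e fC by simp
  qed
  then show ?thesis using gC lt C unfolding is_circuit_def by blast
qed

lemma circuit_facts:
  assumes fam: "graph_matroid_family M" and C: "is_circuit M C"
  shows "is_graph C" "\<not> M C C" "\<And>e. e \<in> C \<Longrightarrow> M C (C - {e})"
proof -
  show gC: "is_graph C" using C unfolding is_circuit_def by simp
  have fC: "finite C" using gC unfolding is_graph_def by simp
  have mC: "matroid C (M C)" using fam_matroid[OF fam gC] .
  show "\<not> M C C" using C indep_rank[OF mC fC] unfolding is_circuit_def grank_def by auto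
  fix e assume e: "e \<in> C"
  have sb: "C - {e} \<subseteq> C" by auto
  have gE: "is_graph (C - {e})" using is_graph_subset[OF gC sb] .
  have "grank M (C - {e}) = card (C - {e})" using C e fC unfolding is_circuit_def by simp
  then have "M (C - {e}) (C - {e})" unfolding grank_def
    using rank_card_indep[OF fam_matroid[OF fam gE]] fC by auto
  then show "M C (C - {e})" using fam_restrict[OF fam gC sb] by auto
qed

lemma circuit_nonempty: "graph_matroid_family M \<Longrightarrow> is_circuit M C \<Longrightarrow> C \<noteq> {}"
  using circuit_facts fam_matroid matroid_empty by metis

lemma dim_le:
  assumes fam: "graph_matroid_family M" and C: "is_circuit M C" and w: "w \<in> verts C"
  shows "dimensionality M + 1 \<le> degree C w"
proof -
  have "dimensionality M \<le> min_degree C - 1" unfolding dimensionality_def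
    by (rule Least_le) (use C in blast)
  moreover have gC: "is_graph C" using circuit_facts[OF fam C] by simp
  ultimately show ?thesis using min_degree_le[OF gC w] degree_pos[OF gC w] by linarith
qed

lemma dim_attained:
  assumes fam: "graph_matroid_family M" and nt: "nontrivial_family M"
  shows "\<exists>C. is_circuit M C \<and> min_degree C = dimensionality M + 1"
proof -
  obtain G where G: "is_graph G" "grank M G < card G" using nt unfolding nontrivial_family_def by blast
  have "\<not> M G G" using G indep_rank[OF fam_matroid[OF fam G(1)]] unfolding grank_def is_graph_def by auto
  then obtain C where C: "is_circuit M C" using min_dep_circuit[OF fam G(1), of G] by blast
  then have "\<exists>k C. is_circuit M C \<and> min_degree C - 1 = k" by blast
  then have "\<exists>C. is_circuit M C \<and> min_degree C - 1 = dimensionality M"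
    unfolding dimensionality_def by (rule LeastI_ex)
  then obtain C' where C': "is_circuit M C'" "min_degree C' - 1 = dimensionality M" by blast
  have gC: "is_graph C'" using circuit_facts[OF fam C'(1)] by simp
  obtain v where "v \<in> verts C'" "min_degree C' = degree C' v"
    using min_degree_attained[OF gC circuit_nonempty[OF fam C'(1)]] by blast
  then have "1 \<le> min_degree C'" using degree_pos[OF gC] by simp
  then show ?thesis using C' by (intro exI[of _ C']) simp
qed

lemma thr_attained:
  assumes fam: "graph_matroid_family M" and nt: "nontrivial_family M"
  shows "\<exists>C. is_circuit M C \<and> min_degree C = dimensionality M + 1 \<and> card (verts C) - 1 = threshold M"
proof -
  have "\<exists>k C. is_circuit M C \<and> min_degree C = dimensionality M + 1 \<and> card (verts C) - 1 = k"
    using dim_attained[OF fam nt] by blast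
  then show ?thesis unfolding threshold_def by (rule LeastI_ex)
qed

definition kg :: "nat set \<Rightarrow> graph" where
  "kg S = {{a,b} | a b. a \<in> S \<and> b \<in> S \<and> a \<noteq> b}"

lemma kg_graph: "finite S \<Longrightarrow> is_graph (kg S)"
  unfolding is_graph_def kg_def
proof
  assume "finite S"
  show "finite {{a, b} |a b. a \<in> S \<and> b \<in> S \<and> a \<noteq> b}"
    by (rule finite_subset[of _ "Pow S"]) (auto simp: \<open>finite S\<close>)
qed auto

lemma complete_kg: "complete_graph t = kg {0..<t}"
  unfolding complete_graph_def kg_def by auto

lemma kg_image: "inj_on f S \<Longrightarrow> (`) f ` kg S = kg (f ` S)"
  unfolding kg_def inj_on_def by auto blast

lemma kg_verts: "verts (kg S) \<subseteq> S"
  unfolding kg_def verts_def by auto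

lemma kg_mono: "S \<subseteq> T \<Longrightarrow> kg S \<subseteq> kg T"
  unfolding kg_def by blast

lemma kg_insert: "v \<notin> S \<Longrightarrow> kg (insert v S) = kg S \<union> (\<lambda>y. {v,y}) ` S"
  unfolding kg_def by auto

lemma graph_sub_kg: "is_graph G \<Longrightarrow> G \<subseteq> kg (verts G)"
proof
  fix e assume "is_graph G" "e \<in> G"
  then obtain a b where "a \<noteq> b" "e = {a,b}" using edge_two by blast
  moreover have "a \<in> verts G" "b \<in> verts G" using \<open>e \<in> G\<close> \<open>e = {a,b}\<close> unfolding verts_def by auto
  ultimately show "e \<in> kg (verts G)" unfolding kg_def by blast
qed

lemma kg_t_iso:
  assumes fam: "graph_matroid_family M" and T: "finite T" "card T = t"
  shows "grank M (kg T) = grank M (complete_graph t)"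
proof -
  obtain f where f: "bij_betw f {0..<t} T" using ex_bij_betw_nat_finite[OF T(1)] T(2) by blast
  have g: "is_graph (complete_graph t)" unfolding complete_kg by (rule kg_graph) simp
  have inj: "inj_on f {0..<t}" using f bij_betw_def by blast
  have inj': "inj_on f (verts (complete_graph t))"
    using inj_on_subset[OF inj] kg_verts complete_kg by metis
  have "(`) f ` complete_graph t = kg T"
    unfolding complete_kg kg_image[OF inj] using f bij_betw_def by metis
  then show ?thesis using iso_lemma(3)[OF fam g inj'] by simp
qed

lemma embed:
  assumes V0: "finite V0" "w0 \<in> V0" "N \<subseteq> V0 - {w0}" "x0 \<in> N" "card V0 = t + 1" "card N = d + 1"
    and S: "finite S" "t \<le> card S" "v \<notin> S" "Y \<subseteq> S" "card Y = d" "x \<in> S - Y"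
  shows "\<exists>f. inj_on f V0 \<and> f w0 = v \<and> f x0 = x \<and> f ` (N - {x0}) \<subseteq> Y \<and> (\<forall>u\<in>V0 - {w0}. f u \<in> S)"
proof -
  have fN: "finite N" using V0 finite_subset by blast
  have "card (N - {x0}) = card Y" using V0 S fN by simp
  then obtain h where h: "bij_betw h (N - {x0}) Y"
    using finite_same_card_bij fN S finite_subset by (metis finite_Diff)
  define R where "R = V0 - insert w0 N"
  have cR: "card R = t - d - 1"
  proof -
    have "insert w0 N \<subseteq> V0" using V0 by auto
    moreover have "card (insert w0 N) = d + 2" using V0 fN by (auto simp: card_insert_if)
    ultimately show ?thesis unfolding R_def using V0 by (simp add: card_Diff_subset fN)
  qed
  have cS: "card (S - Y - {x}) = card S - d - 1"
  proof -
    have "card (S - Y) = card S - d" using S by (simp add: card_Diff_subset finite_subset)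
    then show ?thesis using S by simp
  qed
  have "card R \<le> card (S - Y - {x})" using cR cS S by simp
  then obtain g where g: "g ` R \<subseteq> S - Y - {x}" "inj_on g R"
    using card_le_inj[of R "S - Y - {x}"] V0 S unfolding R_def by auto
  define f where "f u = (if u = w0 then v else if u = x0 then x else if u \<in> N then h u else g u)" for u
  have hY: "u \<in> N - {x0} \<Longrightarrow> h u \<in> Y" for u using h bij_betw_apply by metis
  have hi: "inj_on h (N - {x0})" using h bij_betw_def by blast
  have w0N: "w0 \<notin> N" using V0 by auto
  have fS: "\<forall>u\<in>V0 - {w0}. f u \<in> S"
  proof
    fix u assume u: "u \<in> V0 - {w0}"
    show "f u \<in> S"
    proof (cases "u = x0")
      case True then show ?thesis using u S unfolding f_def by auto
    next
      case False
      show ?thesis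
      proof (cases "u \<in> N")
        case True then show ?thesis using u False hY S unfolding f_def by auto
      next
        case F2: False
        then have "u \<in> R" using u unfolding R_def by auto
        then show ?thesis using g u False F2 unfolding f_def by auto
      qed
    qed
  qed
  have inj: "inj_on f V0"
  proof (rule inj_onI)
    fix a b assume a: "a \<in> V0" and b: "b \<in> V0" and ab: "f a = f b"
    have cls: "u \<in> V0 \<Longrightarrow> (u = w0 \<and> f u = v) \<or> (u = x0 \<and> f u = x) \<or> (u \<in> N - {x0} \<and> f u = h u \<and> h u \<in> Y) \<or> (u \<in> R \<and> f u = g u \<and> g u \<in> S - Y - {x})" for u
    proof -
      assume u: "u \<in> V0"
      have "u \<noteq> w0 \<Longrightarrow> u \<notin> N \<Longrightarrow> u \<in> R" using u unfolding R_def by auto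
      then show ?thesis unfolding f_def using hY g w0N V0 u by auto
    qed
    have vS: "v \<notin> S" "x \<in> S" "x \<notin> Y" "Y \<subseteq> S" using S by auto
    from cls[OF a] show "a = b"
    proof (elim disjE conjE)
      assume "a \<in> N - {x0}" "f a = h a" "h a \<in> Y"
      with cls[OF b] ab vS show "a = b" using inj_onD[OF hi, of a b] by auto
    next
      assume "a \<in> R" "f a = g a" "g a \<in> S - Y - {x}"
      with cls[OF b] ab vS show "a = b" using inj_onD[OF g(2), of a b] by auto
    qed (use cls[OF b] ab vS in auto)
  qed
  have "f w0 = v" unfolding f_def by simp
  moreover have "f x0 = x" using w0N \<open>x0 \<in> N\<close> unfolding f_def by auto
  moreover have "f ` (N - {x0}) \<subseteq> Y" using hY w0N unfolding f_def by auto
  ultimately show ?thesis using inj fS by blast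
qed

lemma kg_memI: "a \<in> S \<Longrightarrow> b \<in> S \<Longrightarrow> a \<noteq> b \<Longrightarrow> {a,b} \<in> kg S"
  unfolding kg_def by blast

lemma circuit_Z:
  assumes fam: "graph_matroid_family M" and C0: "is_circuit M C0"
    and w0: "w0 \<in> verts C0" "degree C0 w0 = d + 1" "card (verts C0) = t + 1"
    and S: "finite S" "t \<le> card S" "v \<notin> S" "Y \<subseteq> S" "card Y = d" "x \<in> S - Y"
  defines "E \<equiv> kg (insert v S)"
  shows "\<exists>Z. Z \<subseteq> kg S \<union> (\<lambda>y. {v,y}) ` Y \<and> M E Z \<and> \<not> M E (insert {v,x} Z)"
proof -
  have gC: "is_graph C0" using circuit_facts[OF fam C0] by simp
  define N where "N = {u. {w0,u} \<in> C0}"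
  have ne: "u \<in> N \<Longrightarrow> u \<noteq> w0" for u
  proof
    assume "u \<in> N" "u = w0"
    then have "{w0} \<in> C0" unfolding N_def by simp
    then have "card {w0} = 2" using gC unfolding is_graph_def by blast
    then show False by simp
  qed
  have NV: "N \<subseteq> verts C0 - {w0}" using ne unfolding N_def verts_def by auto
  have star: "{e\<in>C0. w0 \<in> e} = (\<lambda>u. {w0,u}) ` N"
  proof
    show "{e\<in>C0. w0 \<in> e} \<subseteq> (\<lambda>u. {w0,u}) ` N"
    proof
      fix e assume e: "e \<in> {e\<in>C0. w0 \<in> e}"
      then obtain a b where "a \<noteq> b" "e = {a,b}" using edge_two[OF gC] by blast
      moreover have "w0 \<in> e" "e \<in> C0" using e by auto
      ultimately show "e \<in> (\<lambda>u. {w0,u}) ` N"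
      proof (cases "a = w0")
        case True then show ?thesis using \<open>e = {a,b}\<close> \<open>e \<in> C0\<close> unfolding N_def by blast
      next
        case False
        then have "b = w0" using \<open>e = {a,b}\<close> \<open>w0 \<in> e\<close> by blast
        then have "e = {w0, a}" using \<open>e = {a,b}\<close> by blast
        then show ?thesis using \<open>e \<in> C0\<close> unfolding N_def by blast
      qed
    qed
  qed (auto simp: N_def)
  have "inj_on (\<lambda>u. {w0,u}) N" unfolding inj_on_def by (auto simp: doubleton_eq_iff)
  then have cN: "card N = d + 1" using w0 star card_image unfolding degree_def by metis
  then have "N \<noteq> {}" by auto
  then obtain x0 where x0: "x0 \<in> N" by blast
  have fV: "finite (verts C0)" using verts_finite[OF gC] .
  obtain f where f: "inj_on f (verts C0)" "f w0 = v" "f x0 = x" "f ` (N - {x0}) \<subseteq> Y"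
      "\<forall>u\<in>verts C0 - {w0}. f u \<in> S"
    using embed[OF fV w0(1) NV x0 w0(3) cN S] by blast
  define C' where "C' = (`) f ` C0"
  have gC': "is_graph C'" using iso_lemma(1)[OF fam gC f(1)] unfolding C'_def .
  have isoC: "F \<subseteq> C0 \<Longrightarrow> M C0 F \<longleftrightarrow> M C' ((`) f ` F)" for F
    using iso_lemma(2)[OF fam gC f(1)] unfolding C'_def by blast
  have fin: "u \<in> verts C0 \<Longrightarrow> f u \<in> insert v S" for u using f by (cases "u = w0") auto
  have ev: "e \<in> C0 \<Longrightarrow> e \<subseteq> verts C0" for e unfolding verts_def by auto
  have CE: "C' \<subseteq> E"
  proof
    fix e' assume "e' \<in> C'"
    then obtain e where e: "e \<in> C0" "e' = f ` e" unfolding C'_def by auto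
    then obtain a b where ab: "a \<noteq> b" "e = {a,b}" using edge_two[OF gC] by blast
    have "a \<in> verts C0" "b \<in> verts C0" using ev[OF e(1)] ab by auto
    then have "f a \<noteq> f b" "f a \<in> insert v S" "f b \<in> insert v S"
      using inj_on_contraD[OF f(1) ab(1)] fin by auto
    then have "{f a, f b} \<in> E" unfolding E_def by (rule kg_memI[rotated 2])
    then show "e' \<in> E" using e ab by simp
  qed
  have gE: "is_graph E" unfolding E_def using kg_graph S by simp
  have e0: "{w0,x0} \<in> C0" using x0 unfolding N_def by simp
  define Z where "Z = (`) f ` (C0 - {{w0,x0}})"
  have "M C0 (C0 - {{w0,x0}})" using circuit_facts(3)[OF fam C0 e0] .
  then have "M C' Z" unfolding Z_def using isoC[of "C0 - {{w0,x0}}"] by auto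
  moreover have ZC: "Z \<subseteq> C'" unfolding Z_def C'_def by auto
  ultimately have MZ: "M E Z" using fam_restrict[OF fam gE CE] by auto
  have "f ` {w0,x0} = {v,x}" using f(2,3) by simp
  then have "insert {v,x} Z = C'" unfolding Z_def C'_def using e0 by (metis image_insert insert_Diff)
  moreover have "\<not> M C' C'" using circuit_facts(2)[OF fam C0] isoC[of C0] unfolding C'_def by auto
  ultimately have nd: "\<not> M E (insert {v,x} Z)" using fam_restrict[OF fam gE CE] by auto
  have "Z \<subseteq> kg S \<union> (\<lambda>y. {v,y}) ` Y"
  proof
    fix e' assume "e' \<in> Z"
    then obtain e where e: "e \<in> C0" "e \<noteq> {w0,x0}" "e' = f ` e" unfolding Z_def by auto
    then obtain a b where ab: "a \<noteq> b" "e = {a,b}" using edge_two[OF gC] by blast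
    have abV: "a \<in> verts C0" "b \<in> verts C0" using ev[OF e(1)] ab by auto
    then have fab: "f a \<noteq> f b" using inj_on_contraD[OF f(1) ab(1)] by auto
    show "e' \<in> kg S \<union> (\<lambda>y. {v,y}) ` Y"
    proof (cases "w0 \<in> e")
      case False
      then have "f a \<in> S" "f b \<in> S" using f(5) abV ab by auto
      then have "{f a, f b} \<in> kg S" using fab kg_memI by blast
      then show ?thesis using e ab by simp
    next
      case True
      then obtain u where u: "e = {w0,u}" using ab by auto
      then have "u \<in> N" using e unfolding N_def by simp
      moreover have "u \<noteq> x0" using e u by auto
      ultimately have "f u \<in> Y" using f(4) by auto
      then have "{v, f u} \<in> (\<lambda>y. {v,y}) ` Y" by blast
      then show ?thesis using e u f(2) by simp
    qed
  qed
  then show ?thesis using MZ nd by blast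
qed

lemma K_step:
  assumes fam: "graph_matroid_family M" and C0: "is_circuit M C0"
    and w0: "w0 \<in> verts C0" "degree C0 w0 = d + 1" "card (verts C0) = t + 1"
    and S: "finite S" "t \<le> card S" "v \<notin> S"
  shows "grank M (kg (insert v S)) \<le> grank M (kg S) + d"
proof -
  define E where "E = kg (insert v S)"
  have gE: "is_graph E" unfolding E_def using kg_graph S by simp
  have fE: "finite E" using gE unfolding is_graph_def by simp
  have mE: "matroid E (M E)" using fam_matroid[OF fam gE] .
  have gC: "is_graph C0" using circuit_facts[OF fam C0] by simp
  have "d + 1 \<le> t" using degree_le[OF gC w0(1)] w0 by simp
  then obtain Y where Y: "Y \<subseteq> S" "card Y = d" using obtain_subset_with_card_n[of d S] S by auto
  define A where "A = kg S \<union> (\<lambda>y. {v,y}) ` Y"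
  have kS: "kg S \<subseteq> E" unfolding E_def by (rule kg_mono) auto
  have stE: "{v,y} \<in> E" if "y \<in> S" for y using that S unfolding E_def kg_def by auto
  have AE: "A \<subseteq> E" unfolding A_def using kS stE Y by auto
  have "mrank (M E) A \<le> mrank (M E) (kg S) + card ((\<lambda>y. {v,y}) ` Y)"
    unfolding A_def by (rule rank_subadd[OF mE]) (use fE kS Y S in \<open>auto intro: finite_subset\<close>)
  moreover have "card ((\<lambda>y. {v,y}) ` Y) \<le> d" using card_image_le Y S finite_subset by metis
  ultimately have rA: "mrank (M E) A \<le> mrank (M E) (kg S) + d" by linarith
  have ind: "X \<subseteq> S - Y \<Longrightarrow> mrank (M E) (A \<union> (\<lambda>x. {v,x}) ` X) = mrank (M E) A" if "finite X" for X
    using that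
  proof (induction X rule: finite_induct)
    case empty then show ?case by simp
  next
    case (insert x X)
    have xS: "x \<in> S - Y" using insert by auto
    obtain Z where Z: "Z \<subseteq> A" "M E Z" "\<not> M E (insert {v,x} Z)"
      using circuit_Z[OF fam C0 w0 S Y xS] unfolding A_def E_def by blast
    have sub: "A \<union> (\<lambda>x. {v,x}) ` X \<subseteq> E" using AE stE insert by auto
    have "A \<union> (\<lambda>x. {v,x}) ` insert x X = insert {v,x} (A \<union> (\<lambda>x. {v,x}) ` X)" by auto
    also have "mrank (M E) \<dots> = mrank (M E) (A \<union> (\<lambda>x. {v,x}) ` X)"
      by (rule rank_closure_add[OF mE _ _ Z(2,3)]) (use sub fE Z(1) in \<open>auto intro: finite_subset\<close>)
    finally show ?case using insert by auto
  qed
  have "E = A \<union> (\<lambda>x. {v,x}) ` (S - Y)" unfolding E_def A_def kg_insert[OF S(3)] using Y by auto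
  then have "mrank (M E) E = mrank (M E) A" using ind[of "S - Y"] S by auto
  moreover have "grank M (kg S) = mrank (M E) (kg S)" using grank_sub[OF fam gE kS] .
  ultimately show ?thesis unfolding grank_def E_def using rA by (simp add: E_def)
qed

lemma K_bound:
  assumes fam: "graph_matroid_family M" and C0: "is_circuit M C0"
    and w0: "w0 \<in> verts C0" "degree C0 w0 = d + 1" "card (verts C0) = t + 1"
    and S: "finite S" "t \<le> card S"
  shows "int (grank M (kg S)) \<le> int (grank M (complete_graph t)) + int d * (int (card S) - int t)"
proof -
  obtain T where T: "T \<subseteq> S" "card T = t" using obtain_subset_with_card_n S by metis
  have fT: "finite T" using T S finite_subset by auto
  have main: "A \<inter> T = {} \<Longrightarrow> int (grank M (kg (T \<union> A))) \<le> int (grank M (complete_graph t)) + int d * int (card A)"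
    if "finite A" for A using that
  proof (induction A rule: finite_induct)
    case empty then show ?case using kg_t_iso[OF fam fT T(2)] by simp
  next
    case (insert v A)
    have "grank M (kg (insert v (T \<union> A))) \<le> grank M (kg (T \<union> A)) + d"
      by (rule K_step[OF fam C0 w0]) (use insert fT T in \<open>auto intro: card_mono\<close>)
    then have "int (grank M (kg (insert v (T \<union> A)))) \<le> int (grank M (kg (T \<union> A))) + int d" by linarith
    moreover have "T \<union> insert v A = insert v (T \<union> A)" by auto
    ultimately show ?case using insert by (simp add: algebra_simps)
  qed
  have "S = T \<union> (S - T)" using T by auto
  then have "int (grank M (kg S)) \<le> int (grank M (complete_graph t)) + int d * int (card (S - T))"
    using main[of "S - T"] S by auto
  moreover have "card (S - T) = card S - t" using T fT by (simp add: card_Diff_subset)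
  ultimately show ?thesis using S by simp
qed

theorem lemma3p20:
  fixes M :: "graph \<Rightarrow> nat set set \<Rightarrow> bool"
    and d t \<delta> :: nat and r0 :: int and \<epsilon> :: real and G :: graph
  assumes "graph_matroid_family M"
    and "nontrivial_family M" and "unbounded_family M"
    and "d = dimensionality M" and "t = threshold M"
    and "r0 = int (grank M (complete_graph t)) - int d * int t"
    and "\<epsilon> = 1 / (6 * real d)"
    and "0 < \<delta>" and "6 * r0 \<le> int \<delta>" and "t \<le> \<delta>"
    and "\<forall>H. is_graph H \<and> H \<noteq> {} \<and> \<delta> \<le> min_degree H \<longrightarrow>
           (\<exists>U. d_dominating H d U \<and> real (card U) \<le> \<epsilon> * real (card (verts H)))"
    and "is_graph G" and "G \<noteq> {}" and "\<delta> \<le> min_degree G"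
  shows "\<exists>v0\<in>verts G. grank M G \<le> grank M (delete_vertex G v0) + d"
proof -
  note fam = assms(1)
  note gG = assms(12)
  obtain C0 where C0: "is_circuit M C0" "min_degree C0 = d + 1" "card (verts C0) - 1 = t"
    using thr_attained[OF fam assms(2)] assms(4,5) by blast
  have gC: "is_graph C0" using circuit_facts[OF fam C0(1)] by simp
  obtain w0 where w0: "w0 \<in> verts C0" "degree C0 w0 = d + 1"
    using min_degree_attained[OF gC circuit_nonempty[OF fam C0(1)]] C0(2) by metis
  have cC: "card (verts C0) = t + 1" using C0(3) w0(1) verts_finite[OF gC]
    by (metis Suc_eq_plus1 Suc_pred' card_gt_0_iff empty_iff)
  define V where "V = verts G"
  define n where "n = card V"
  have fV: "finite V" unfolding V_def using verts_finite[OF gG] .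
  obtain v1 where v1: "v1 \<in> V" using min_degree_attained[OF gG assms(13)] unfolding V_def by blast
  have "\<delta> \<le> n - 1" using assms(14) min_degree_le[OF gG, of v1] degree_le[OF gG, of v1] v1
    unfolding V_def n_def by linarith
  moreover have "0 < n" using v1 fV unfolding n_def by (auto simp: card_gt_0_iff)
  ultimately have dn: "\<delta> < n" by linarith
  have gK: "is_graph (kg V)" using kg_graph[OF fV] .
  have GK: "G \<subseteq> kg V" unfolding V_def using graph_sub_kg[OF gG] .
  have "grank M G = mrank (M (kg V)) G" using grank_sub[OF fam gK GK] .
  also have "\<dots> \<le> mrank (M (kg V)) (kg V)"
    by (rule rank_mono) (use gK GK matroid_empty[OF fam_matroid[OF fam gK]] in \<open>auto simp: is_graph_def\<close>)
  finally have "grank M G \<le> grank M (kg V)" unfolding grank_def .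
  moreover have "int (grank M (kg V)) \<le> int (grank M (complete_graph t)) + int d * (int n - int t)"
    unfolding n_def by (rule K_bound[OF fam C0(1) w0 cC fV]) (use dn assms(10) n_def in simp)
  ultimately have rG: "int (grank M G) \<le> r0 + int d * int n" using assms(6) by (simp add: algebra_simps)
  obtain U where U: "d_dominating G d U" "real (card U) \<le> \<epsilon> * real n"
    using spec[OF assms(11), of G] gG assms(13) assms(14) unfolding n_def V_def by blast
  have UV: "U \<subseteq> V" using U(1) unfolding d_dominating_def V_def by simp
  define W where "W = V - U"
  have "\<forall>w\<in>W. \<exists>N. N \<subseteq> {u\<in>U. {u, w} \<in> G} \<and> card N = d"
  proof
    fix w assume "w \<in> W"
    then have "d \<le> card {u\<in>U. {u, w} \<in> G}" using U(1) unfolding d_dominating_def W_def V_def by blast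
    then obtain N where "N \<subseteq> {u\<in>U. {u, w} \<in> G}" "card N = d" by (rule obtain_subset_with_card_n)
    then show "\<exists>N. N \<subseteq> {u\<in>U. {u, w} \<in> G} \<and> card N = d" by blast
  qed
  from bchoice[OF this] obtain Nf where Nf0: "\<forall>w\<in>W. Nf w \<subseteq> {u\<in>U. {u, w} \<in> G} \<and> card (Nf w) = d" ..
  have Nf: "w \<in> W \<Longrightarrow> Nf w \<subseteq> {u\<in>U. {u, w} \<in> G} \<and> card (Nf w) = d" for w using Nf0 by blast
  define star where "star w = (\<lambda>u. {w,u}) ` Nf w" for w
  define D where "D = (\<Union>w\<in>W. star w)"
  have fU: "finite U" using UV fV finite_subset by blast
  have fW: "finite W" unfolding W_def using fV by simp
  have NU: "w \<in> W \<Longrightarrow> Nf w \<subseteq> U" for w using Nf by blast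
  have fN: "w \<in> W \<Longrightarrow> finite (Nf w)" for w using NU fU finite_subset by blast
  have WU: "w \<in> W \<Longrightarrow> w \<notin> U" for w unfolding W_def by simp
  have DG: "D \<subseteq> G" unfolding D_def star_def using Nf by (auto simp: insert_commute)
  have Dw: "e \<in> D \<Longrightarrow> w \<in> W \<Longrightarrow> w \<in> e \<Longrightarrow> e \<in> star w" for e w
  proof -
    assume "e \<in> D" "w \<in> W" "w \<in> e"
    then obtain w' u where "w' \<in> W" "u \<in> Nf w'" "e = {w',u}" unfolding D_def star_def by auto
    moreover have "u \<in> U" using Nf \<open>w' \<in> W\<close> \<open>u \<in> Nf w'\<close> by auto
    ultimately have "w = w'" using \<open>w \<in> e\<close> WU[OF \<open>w \<in> W\<close>] by auto
    then show "e \<in> star w" using \<open>e = {w',u}\<close> \<open>u \<in> Nf w'\<close> unfolding star_def by auto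
  qed
  have cstar: "w \<in> W \<Longrightarrow> card (star w) = d" for w
  proof -
    assume w: "w \<in> W"
    have "inj_on (\<lambda>u. {w,u}) (Nf w)" unfolding inj_on_def by (auto simp: doubleton_eq_iff)
    then show ?thesis unfolding star_def using Nf[OF w] by (simp add: card_image)
  qed
  have mG: "matroid G (M G)" using fam_matroid[OF fam gG] .
  have fG: "finite G" using gG unfolding is_graph_def by simp
  have ID: "M G D"
  proof (rule ccontr)
    assume "\<not> M G D"
    then obtain C where C: "C \<subseteq> D" "is_circuit M C" using min_dep_circuit[OF fam gG DG] by blast
    obtain e where e: "e \<in> C" using circuit_nonempty[OF fam C(2)] by blast
    have "e \<in> D" using C(1) e by blast
    then obtain w where w1: "w \<in> W" "e \<in> star w" unfolding D_def by blast
    then obtain u where "e = {w,u}" unfolding star_def by blast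
    with w1 have wu: "w \<in> W" "e = {w,u}" by auto
    have wC: "w \<in> verts C" using e wu unfolding verts_def by auto
    have gC': "is_graph C" using circuit_facts[OF fam C(2)] by simp
    have sub: "{e\<in>C. w \<in> e} \<subseteq> star w" using Dw C(1) wu(1) by blast
    have "finite (star w)" unfolding star_def using fN[OF wu(1)] by simp
    then have "degree C w \<le> card (star w)" unfolding degree_def using sub by (rule card_mono)
    then have "degree C w \<le> d" using cstar[OF wu(1)] by simp
    then show False using dim_le[OF fam C(2) wC] assms(4) by simp
  qed
  obtain B where B: "D \<subseteq> B" "B \<subseteq> G" "M G B" "\<forall>x\<in>G - B. \<not> M G (insert x B)"
    using extend_maximal[OF mG fG DG ID] by blast
  have cB: "card B = grank M G" unfolding grank_def using maximal_card[OF mG fG B(2,3,4)] .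
  have cD: "card D = d * card W"
  proof -
    have "card D = (\<Sum>w\<in>W. card (star w))" unfolding D_def
    proof (rule card_UN_disjoint[OF fW])
      show "\<forall>i\<in>W. finite (star i)" using fN unfolding star_def by simp
      show "\<forall>i\<in>W. \<forall>j\<in>W. i \<noteq> j \<longrightarrow> star i \<inter> star j = {}"
      proof (intro ballI impI)
        fix i j assume ij: "i \<in> W" "j \<in> W" "i \<noteq> j"
        show "star i \<inter> star j = {}"
        proof (rule ccontr)
          assume "star i \<inter> star j \<noteq> {}"
          then obtain e where "e \<in> star i" "e \<in> star j" by blast
          then obtain u u' where "e = {i,u}" "u \<in> Nf i" "e = {j,u'}" "u' \<in> Nf j" unfolding star_def by blast
          moreover have "u \<in> U" "u' \<in> U" using NU ij \<open>u \<in> Nf i\<close> \<open>u' \<in> Nf j\<close> by blast+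
          moreover have "i \<notin> U" "j \<notin> U" using WU ij by blast+
          ultimately show False using ij(3) by (auto simp: doubleton_eq_iff)
        qed
      qed
    qed
    then show ?thesis using cstar by simp
  qed
  define X where "X = B - D"
  have fB: "finite B" using B fG finite_subset by blast
  have cX: "card X = card B - card D" unfolding X_def using B(1) fB by (simp add: card_Diff_subset finite_subset)
  have "card (\<Union>X) \<le> sum card X"
    by (rule card_Union_le_sum_card)
  also have "sum card X = 2 * card X"
    using X_def B gG unfolding is_graph_def by (simp add: subset_iff)
  finally have cUX: "card (\<Union>X) \<le> 2 * card X" .
  have cW: "card W = n - card U" unfolding W_def n_def using UV fV by (simp add: card_Diff_subset fU)
  have key: "2 * int (card X) < int (card W)"
  proof -
    have cDB: "card D \<le> card B" using B(1) fB card_mono by blast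
    have iX: "int (card X) \<le> r0 + int d * int (card U)"
      using rG cX cB cD cW cDB UV card_mono[OF fV UV] unfolding n_def
      by (simp add: algebra_simps of_nat_diff)
    have r: "real (card U) \<le> \<epsilon> * real n" using U(2) .
    have "6 * real d * real (card U) \<le> real n \<and> 6 * real (card U) \<le> real n"
    proof (cases "d = 0")
      case True
      then have "card U = 0" using r assms(7) by simp
      then show ?thesis by simp
    next
      case False
      then have "6 * real d * real (card U) \<le> real n" using r assms(7)
        by (simp add: field_simps)
      moreover have "1 \<le> real d" using False by simp
      then have "1 * real (card U) \<le> real d * real (card U)" by (rule mult_right_mono) simp
      then have "real (card U) \<le> real d * real (card U)" by simp
      ultimately show ?thesis by linarith
    qed
    moreover have "6 * real_of_int r0 < real n" using assms(9) dn by linarith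
    ultimately have b1: "6 * real d * real (card U) \<le> real n" "6 * real (card U) \<le> real n" "6 * real_of_int r0 < real n" by auto
    have "6 * (real d * real (card U)) \<le> real n" using b1(1) by (simp add: mult.assoc)
    then have "2 * (real_of_int r0 + real d * real (card U)) < real n - real (card U)" using b1(2,3) by (simp add: field_simps)
    then have h: "2 * (real_of_int r0 + real d * real (card U)) < real n - real (card U)" .
    have "real_of_int (int (card X)) \<le> real_of_int (r0 + int d * int (card U))" using iX by (simp only: of_int_le_iff)
    then have h2: "real (card X) \<le> real_of_int r0 + real d * real (card U)" by simp
    have "real (card W) = real n - real (card U)" using cW card_mono[OF fV UV] unfolding n_def by (simp add: of_nat_diff)
    then have "real (2 * card X) < real (card W)" using h h2 by simp
    then have "2 * card X < card W" by (simp only: of_nat_less_iff)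
    then show ?thesis by simp
  qed
  have "\<not> W \<subseteq> \<Union>X"
  proof
    assume "W \<subseteq> \<Union>X"
    moreover have "finite (\<Union>X)"
    proof (rule finite_Union)
      show "finite X" using X_def fB by simp
      fix e assume "e \<in> X"
      then have "card e = 2" using X_def B(2) gG unfolding is_graph_def by blast
      then show "finite e" by (metis card.infinite zero_neq_numeral)
    qed
    ultimately have "card W \<le> card (\<Union>X)" by (intro card_mono)
    then show False using cUX key by linarith
  qed
  then obtain w where w: "w \<in> W" "w \<notin> \<Union>X" by blast
  define B' where "B' = {e\<in>B. w \<notin> e}"
  have dv: "delete_vertex G w \<subseteq> G" unfolding delete_vertex_def by auto
  have gDv: "is_graph (delete_vertex G w)" using is_graph_subset[OF gG dv] .
  have B'sub: "B' \<subseteq> delete_vertex G w" unfolding B'_def delete_vertex_def using B by auto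
  have "M G B'" using matroid_down[OF mG B(3)] unfolding B'_def by auto
  then have "M (delete_vertex G w) B'" using fam_restrict[OF fam gG dv] B'sub by auto
  then have "card B' \<le> grank M (delete_vertex G w)" unfolding grank_def
    using mrank_ge[of "delete_vertex G w" B'] B'sub gDv unfolding is_graph_def by auto
  moreover have "{e\<in>B. w \<in> e} \<subseteq> star w" using Dw w unfolding X_def by auto
  then have "card {e\<in>B. w \<in> e} \<le> d" using card_mono[of "star w"] cstar[OF w(1)] fN[OF w(1)] unfolding star_def by auto
  moreover have "card B \<le> card B' + card {e\<in>B. w \<in> e}"
  proof -
    have "B = B' \<union> {e\<in>B. w \<in> e}" unfolding B'_def by auto
    then show ?thesis by (metis card_Un_le)
  qed
  ultimately have "grank M G \<le> grank M (delete_vertex G w) + d" using cB by linarith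
  moreover have "w \<in> verts G" using w unfolding W_def V_def by simp
  ultimately show ?thesis by blast
qed

end
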